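(* Let $G$ be a very well-covered graph with $2h$ vertices and let $e\in E(G)$. If the ideal $(I(G)^2:e)$ is squarefree, then the graph $G'$ whose edge ideal is $(I(G)^2:e)$ is very well-covered.
   Context: $I(G)=(uv\mid\{u,v\}\in E(G))\subseteq K[V(G)]$ is the edge ideal; the edge $e=\{a,b\}$ is identified with the monomial $ab$. The ideal $(I(G)^2:e)$ is generated by quadratic monomials; when it is squarefree it is the edge ideal of a graph $G'$ on the vertex set $V(G)$. $G$ is very well-covered if it has no isolated vertices, all minimal vertex covers have the same size, and this size is $|V(G)|/2$. *)

theory Defs
  imports Main "HOL-Library.Multiset"
begin

definition simple_graph :: "'a set \<Rightarrow> 'a set set \<Rightarrow> bool" where
  "simple_graph V E \<longleftrightarrow> finite V \<and> (\<forall>e\<in>E. e \<subseteq> V \<and> card e = 2)"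

definition vertex_cover :: "'a set \<Rightarrow> 'a set set \<Rightarrow> 'a set \<Rightarrow> bool" where
  "vertex_cover V E C \<longleftrightarrow> C \<subseteq> V \<and> (\<forall>e\<in>E. e \<inter> C \<noteq> {})"

definition minimal_vertex_cover :: "'a set \<Rightarrow> 'a set set \<Rightarrow> 'a set \<Rightarrow> bool" where
  "minimal_vertex_cover V E C \<longleftrightarrow>
     vertex_cover V E C \<and> (\<forall>D. D \<subset> C \<longrightarrow> \<not> vertex_cover V E D)"

definition very_well_covered :: "'a set \<Rightarrow> 'a set set \<Rightarrow> bool" where
  "very_well_covered V E \<longleftrightarrow>
     (\<forall>v\<in>V. \<exists>e\<in>E. v \<in> e) \<and>
     (\<forall>C. minimal_vertex_cover V E C \<longrightarrow> 2 * card C = card V)"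

(* Monomials in K[V] are represented by their exponent multisets over V.
   A monomial ideal is represented by the set of monomials it contains. *)
definition monomials :: "'a set \<Rightarrow> 'a multiset set" where
  "monomials V = {m. set_mset m \<subseteq> V}"

definition mon_ideal :: "'a set \<Rightarrow> 'a multiset set \<Rightarrow> 'a multiset set" where
  "mon_ideal V S = {m \<in> monomials V. \<exists>g\<in>S. g \<subseteq># m}"

definition edge_mon :: "'a set \<Rightarrow> 'a multiset" where
  "edge_mon e = mset_set e"

definition edge_ideal :: "'a set \<Rightarrow> 'a set set \<Rightarrow> 'a multiset set" where
  "edge_ideal V E = mon_ideal V (edge_mon ` E)"

definition edge_ideal_sq :: "'a set \<Rightarrow> 'a set set \<Rightarrow> 'a multiset set" where
  "edge_ideal_sq V E = mon_ideal V {edge_mon e1 + edge_mon e2 | e1 e2. e1 \<in> E \<and> e2 \<in> E}"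

definition mon_colon :: "'a set \<Rightarrow> 'a multiset set \<Rightarrow> 'a multiset \<Rightarrow> 'a multiset set" where
  "mon_colon V J f = {m \<in> monomials V. m + f \<in> J}"

definition min_gens :: "'a multiset set \<Rightarrow> 'a multiset set" where
  "min_gens J = {m \<in> J. \<forall>g\<in>J. g \<subseteq># m \<longrightarrow> g = m}"

definition squarefree_mon_ideal :: "'a multiset set \<Rightarrow> bool" where
  "squarefree_mon_ideal J \<longleftrightarrow> (\<forall>m\<in>min_gens J. \<forall>x. count m x \<le> 1)"

definition ideal_graph_edges :: "'a set \<Rightarrow> 'a multiset set \<Rightarrow> 'a set set" where
  "ideal_graph_edges V J = {{u, v} | u v. u \<in> V \<and> v \<in> V \<and> u \<noteq> v \<and> {#u, v#} \<in> J}"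

end

theory Submission
  imports Defs
begin

lemma H3: assumes "{#u,v,b#} = ({#q,r,s#}::'a multiset)"
  shows "{#u,v#}={#r,s#} \<or> ({#u,v#} = {#q,s#} \<and> b = r) \<or> ({#u,v#}={#q,r#} \<and> b = s)"
proof -
  have "b \<in># {#q,r,s#}" using assms[symmetric] by simp
  then have "b = q \<or> b = r \<or> b = s" by simp
  then show ?thesis
  proof (elim disjE)
    assume "b = q" then show ?thesis using assms by (simp add: add_mset_commute[of b]) (metis add_mset_commute)
  next
    assume "b = r" then show ?thesis using assms by (simp add: add_mset_commute[of b]) (metis add_mset_commute)
  next
    assume "b = s" then show ?thesis using assms by (simp add: add_mset_commute[of b]) (metis add_mset_commute)
  qed
qed

lemma L2: "{#u,v#} = ({#q,s#}::'a multiset) \<longleftrightarrow> (u=q\<and>v=s) \<or> (u=s\<and>v=q)"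
  by (auto simp: add_eq_conv_ex)

definition concl4 :: "'a \<Rightarrow> 'a \<Rightarrow> 'a \<Rightarrow> 'a \<Rightarrow> 'a set set \<Rightarrow> bool" where
  "concl4 u v a b F \<longleftrightarrow> {u,v} \<in> F \<or> ({u,a} \<in> F \<and> {v,b} \<in> F) \<or> ({v,a} \<in> F \<and> {u,b} \<in> F)"

lemma H4a: assumes "{#u,v,a,b#} = ({#a,q,r,s#}::'a multiset)"
  shows "concl4 u v a b {{a,q},{r,s}}"
proof -
  have "{#u,v,b#} = {#q,r,s#}" using assms by (simp add: add_mset_commute)
  then have "{#u,v#}={#r,s#} \<or> ({#u,v#} = {#q,s#} \<and> b = r) \<or> ({#u,v#}={#q,r#} \<and> b = s)"
    by (rule H3)
  then show ?thesis unfolding concl4_def L2 by (auto simp: insert_commute)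
qed

lemma H4: assumes "{#u,v,a,b#} = ({#p,q,r,s#}::'a multiset)"
  shows "concl4 u v a b {{p,q},{r,s}}"
proof -
  have "a \<in># {#p,q,r,s#}" using assms[symmetric] by simp
  then have "a = p \<or> a = q \<or> a = r \<or> a = s" by simp
  then show ?thesis
  proof (elim disjE)
    assume "a = p" then show ?thesis using H4a[of u v a b q r s] assms by simp
  next
    assume "a = q"
    then have "{#u,v,a,b#} = {#a,p,r,s#}" using assms by (simp add: add_mset_commute)
    then have "concl4 u v a b {{a,p},{r,s}}" by (rule H4a)
    then show ?thesis using \<open>a = q\<close> by (simp add: insert_commute)
  next
    assume "a = r"
    then have "{#u,v,a,b#} = {#a,s,p,q#}" using assms by (simp add: add_mset_commute)
    then have "concl4 u v a b {{a,s},{p,q}}" by (rule H4a)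
    then show ?thesis using \<open>a = r\<close> by (simp add: insert_commute)
  next
    assume "a = s"
    then have "{#u,v,a,b#} = {#a,r,p,q#}" using assms by (simp add: add_mset_commute)
    then have "concl4 u v a b {{a,r},{p,q}}" by (rule H4a)
    then show ?thesis using \<open>a = s\<close> by (simp add: insert_commute)
  qed
qed

lemma card2E: assumes "card f = 2" obtains x y where "f = {x,y}" "x \<noteq> y"
proof -
  from assms obtain x y where "f = {x,y}" "x \<noteq> y" unfolding card_2_iff by blast
  then show thesis by (rule that)
qed

lemma edge_mon2: "x \<noteq> y \<Longrightarrow> edge_mon {x,y} = {#x,y#}"
  by (simp add: edge_mon_def)

lemma subset_size_eq: assumes "(A::'a multiset) \<subseteq># B" "size A = size B" shows "A = B"
proof (rule ccontr)
  assume "A \<noteq> B"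
  with assms(1) have "A \<subset># B" by (simp add: subset_mset.le_neq_trans)
  then have "size A < size B" by (rule mset_subset_size)
  with assms(2) show False by simp
qed

lemma cover_aux:
  assumes "{u,a} \<in> E" "{v,b} \<in> E" "f = {u,v}" "f \<inter> (C - {x}) = {}" "D \<subseteq> C - {x}"
    "\<forall>g\<in>E. g \<inter> D \<noteq> {}" "\<forall>g\<in>E. g \<inter> C \<noteq> {}" "a \<notin> C \<or> b \<notin> C"
  shows False
proof -
  from assms(8) show False
  proof
    assume aC: "a \<notin> C"
    have "{u,a} \<inter> C \<noteq> {}" by (rule bspec[OF assms(7) assms(1)])
    with aC have uC: "u \<in> C" by auto
    have "u \<in> f" using assms(3) by simp
    with uC assms(4) have ux: "u = x" by blast
    have "{u,a} \<inter> D \<noteq> {}" by (rule bspec[OF assms(6) assms(1)])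
    moreover have "u \<notin> D" "a \<notin> D" using ux aC assms(5) by auto
    ultimately show False by auto
  next
    assume bC: "b \<notin> C"
    have "{v,b} \<inter> C \<noteq> {}" by (rule bspec[OF assms(7) assms(2)])
    with bC have vC: "v \<in> C" by auto
    have "v \<in> f" using assms(3) by simp
    with vC assms(4) have vx: "v = x" by blast
    have "{v,b} \<inter> D \<noteq> {}" by (rule bspec[OF assms(6) assms(2)])
    moreover have "v \<notin> D" "b \<notin> D" using vx bC assms(5) by auto
    ultimately show False by auto
  qed
qed

theorem theorem3p6:
  fixes V :: "'a set" and E :: "'a set set" and h :: nat and e :: "'a set"
  assumes "simple_graph V E"
    and "very_well_covered V E"
    and "card V = 2 * h"
    and "e \<in> E"
    and "squarefree_mon_ideal (mon_colon V (edge_ideal_sq V E) (edge_mon e))"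
  shows "very_well_covered V
           (ideal_graph_edges V (mon_colon V (edge_ideal_sq V E) (edge_mon e)))"
proof -
  define J where "J = mon_colon V (edge_ideal_sq V E) (edge_mon e)"
  define E' where "E' = ideal_graph_edges V J"
  have sg: "\<And>f. f \<in> E \<Longrightarrow> f \<subseteq> V \<and> card f = 2" using assms(1) by (simp add: simple_graph_def)
  obtain a b where e: "e = {a,b}" "a \<noteq> b" using sg[OF assms(4)] card2E by metis
  have abV: "a \<in> V" "b \<in> V" using sg[OF assms(4)] e by auto
  have em: "edge_mon e = {#a,b#}" using e edge_mon2 by metis
  have noloop: "\<And>x. {x} \<notin> E" using sg by fastforce
  have sizeE: "\<And>f. f \<in> E \<Longrightarrow> size (edge_mon f) = 2"
    using sg by (simp add: edge_mon_def)
  have K0: "\<And>m. m \<in> J \<Longrightarrow> 2 \<le> size m"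
  proof -
    fix m assume "m \<in> J"
    then obtain e1 e2 where ee: "e1 \<in> E" "e2 \<in> E" "edge_mon e1 + edge_mon e2 \<subseteq># m + {#a,b#}"
      unfolding J_def mon_colon_def edge_ideal_sq_def mon_ideal_def em by blast
    have "size (edge_mon e1 + edge_mon e2) \<le> size (m + {#a,b#})"
      using ee(3) by (rule size_mset_mono)
    then show "2 \<le> size m" using sizeE[OF ee(1)] sizeE[OF ee(2)] by simp
  qed
  have mon2: "\<And>x y. x \<in> V \<Longrightarrow> y \<in> V \<Longrightarrow> {#x,y#} \<in> monomials V"
    by (simp add: monomials_def)
  have K1: "\<And>f. f \<in> E' \<Longrightarrow> \<exists>x y. f = {x,y} \<and> x \<noteq> y \<and> concl4 x y a b E"
  proof -
    fix f assume "f \<in> E'"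
    then obtain x y where xy: "f = {x,y}" "x \<noteq> y" "{#x,y#} \<in> J"
      unfolding E'_def ideal_graph_edges_def by blast
    then obtain e1 e2 where ee: "e1 \<in> E" "e2 \<in> E" "edge_mon e1 + edge_mon e2 \<subseteq># {#x,y#} + {#a,b#}"
      unfolding J_def mon_colon_def edge_ideal_sq_def mon_ideal_def em by blast
    have eq: "edge_mon e1 + edge_mon e2 = {#x,y#} + {#a,b#}"
      using subset_size_eq[OF ee(3)] sizeE[OF ee(1)] sizeE[OF ee(2)] by simp
    obtain p q where pq: "e1 = {p,q}" "p \<noteq> q" using sg[OF ee(1)] card2E by metis
    obtain r s where rs: "e2 = {r,s}" "r \<noteq> s" using sg[OF ee(2)] card2E by metis
    have "{#x,y,a,b#} = {#x,y#}+{#a,b#}" by simp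
    also have "\<dots> = edge_mon e1 + edge_mon e2" using eq by simp
    also have "\<dots> = {#p,q#}+{#r,s#}" using pq rs by (simp add: edge_mon2)
    also have "\<dots> = {#p,q,r,s#}" by simp
    finally have "{#x,y,a,b#} = {#p,q,r,s#}" .
    then have "concl4 x y a b {{p,q},{r,s}}" by (rule H4)
    moreover have "{{p,q},{r,s}} = {e1,e2}" using pq rs by simp
    ultimately have "concl4 x y a b {e1,e2}" by simp
    moreover have "{e1,e2} \<subseteq> E" using ee by simp
    ultimately have "concl4 x y a b E" unfolding concl4_def by blast
    then show "\<exists>x y. f = {x,y} \<and> x \<noteq> y \<and> concl4 x y a b E" using xy by blast
  qed
  have K2: "\<And>u v. u \<noteq> v \<Longrightarrow> {u,a} \<in> E \<Longrightarrow> {v,b} \<in> E \<Longrightarrow> {u,v} \<in> E'"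
  proof -
    fix u v assume uv: "u \<noteq> v" "{u,a} \<in> E" "{v,b} \<in> E"
    have V: "u \<in> V" "v \<in> V" using sg[OF uv(2)] sg[OF uv(3)] by auto
    have ua: "u \<noteq> a" using uv(2) noloop by force
    have vb: "v \<noteq> b" using uv(3) noloop by force
    have "edge_mon {u,a} + edge_mon {v,b} \<subseteq># {#u,v#} + {#a,b#}"
      using ua vb by (simp add: edge_mon2 add_mset_commute)
    then have "{#u,v#} + {#a,b#} \<in> edge_ideal_sq V E"
      unfolding edge_ideal_sq_def mon_ideal_def using uv V abV by (auto simp: monomials_def)
    then have "{#u,v#} \<in> J" unfolding J_def mon_colon_def em using mon2 V by auto
    then show "{u,v} \<in> E'" unfolding E'_def ideal_graph_edges_def using V uv(1) by blast
  qed
  have K3: "E \<subseteq> E'"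
  proof
    fix f assume f: "f \<in> E"
    obtain u v where uv: "f = {u,v}" "u \<noteq> v" using sg[OF f] card2E by metis
    have V: "u \<in> V" "v \<in> V" using sg[OF f] uv by auto
    have "edge_mon f + edge_mon e \<subseteq># {#u,v#} + {#a,b#}"
      using uv em by (simp add: edge_mon2)
    then have "{#u,v#} + {#a,b#} \<in> edge_ideal_sq V E"
      unfolding edge_ideal_sq_def mon_ideal_def using f assms(4) V abV by (auto simp: monomials_def)
    then have "{#u,v#} \<in> J" unfolding J_def mon_colon_def em using mon2 V by auto
    then show "f \<in> E'" unfolding E'_def ideal_graph_edges_def using V uv by blast
  qed
  have K4: "\<And>z. {z,a} \<in> E \<Longrightarrow> {z,b} \<in> E \<Longrightarrow> False"
  proof -
    fix z assume z: "{z,a} \<in> E" "{z,b} \<in> E"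
    have V: "z \<in> V" using sg[OF z(1)] by auto
    have za: "z \<noteq> a" using z(1) noloop by force
    have zb: "z \<noteq> b" using z(2) noloop by force
    have "edge_mon {z,a} + edge_mon {z,b} \<subseteq># {#z,z#} + {#a,b#}"
      using za zb by (simp add: edge_mon2 add_mset_commute)
    then have "{#z,z#} + {#a,b#} \<in> edge_ideal_sq V E"
      unfolding edge_ideal_sq_def mon_ideal_def using z V abV by (auto simp: monomials_def)
    then have zz: "{#z,z#} \<in> J" unfolding J_def mon_colon_def em using mon2 V by auto
    have "{#z,z#} \<in> min_gens J"
      unfolding min_gens_def
    proof (intro CollectI conjI ballI impI zz)
      fix g assume "g \<in> J" "g \<subseteq># {#z,z#}"
      then have "2 \<le> size g" "size g \<le> size {#z,z#}" using K0 size_mset_mono by blast+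
      then have "size g = size {#z,z#}" by simp
      then show "g = {#z,z#}" using subset_size_eq \<open>g \<subseteq># {#z,z#}\<close> by blast
    qed
    then have "count {#z,z#} z \<le> 1" using assms(5) unfolding squarefree_mon_ideal_def J_def by blast
    then show False by simp
  qed
  have KA: "\<And>f. f \<in> E' \<Longrightarrow> a \<in> f \<Longrightarrow> f \<in> E"
  proof -
    fix f assume f: "f \<in> E'" "a \<in> f"
    then obtain x y where xy: "f = {x,y}" "x \<noteq> y" "concl4 x y a b E" using K1 by blast
    from xy(3) consider "f \<in> E" | "{x,a}\<in>E" "{y,b}\<in>E" | "{y,a}\<in>E" "{x,b}\<in>E"
      unfolding concl4_def xy(1) by blast
    then show "f \<in> E"
    proof cases
      case 1 thus ?thesis .
    next
      case 2 show ?thesis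
      proof (cases "a = x")
        case True with 2 xy(1) noloop show ?thesis by (simp add: insert_commute)
      next
        case False with f(2) xy(1) have "a = y" by blast
        with 2 xy(1) noloop show ?thesis by (simp add: insert_commute)
      qed
    next
      case 3 show ?thesis
      proof (cases "a = y")
        case True with 3 xy(1) noloop show ?thesis by (simp add: insert_commute)
      next
        case False with f(2) xy(1) have "a = x" by blast
        with 3 xy(1) noloop show ?thesis by (simp add: insert_commute)
      qed
    qed
  qed
  have KB: "\<And>f. f \<in> E' \<Longrightarrow> b \<in> f \<Longrightarrow> f \<in> E"
  proof -
    fix f assume f: "f \<in> E'" "b \<in> f"
    then obtain x y where xy: "f = {x,y}" "x \<noteq> y" "concl4 x y a b E" using K1 by blast
    from xy(3) consider "f \<in> E" | "{x,a}\<in>E" "{y,b}\<in>E" | "{y,a}\<in>E" "{x,b}\<in>E"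
      unfolding concl4_def xy(1) by blast
    then show "f \<in> E"
    proof cases
      case 1 thus ?thesis .
    next
      case 2 show ?thesis
      proof (cases "b = x")
        case True with 2 xy(1) noloop show ?thesis by (simp add: insert_commute)
      next
        case False with f(2) xy(1) have "b = y" by blast
        with 2 xy(1) noloop show ?thesis by (simp add: insert_commute)
      qed
    next
      case 3 show ?thesis
      proof (cases "b = y")
        case True with 3 xy(1) noloop show ?thesis by (simp add: insert_commute)
      next
        case False with f(2) xy(1) have "b = x" by blast
        with 3 xy(1) noloop show ?thesis by (simp add: insert_commute)
      qed
    qed
  qed
  have part1: "\<forall>v\<in>V. \<exists>f\<in>E'. v \<in> f"
    using assms(2) K3 unfolding very_well_covered_def by blast
  have part2: "\<And>C. minimal_vertex_cover V E' C \<Longrightarrow> minimal_vertex_cover V E C"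
  proof -
    fix C assume mC: "minimal_vertex_cover V E' C"
    have CV: "C \<subseteq> V" and cov': "\<forall>f\<in>E'. f \<inter> C \<noteq> {}"
      using mC unfolding minimal_vertex_cover_def vertex_cover_def by auto
    have cov: "\<forall>f\<in>E. f \<inter> C \<noteq> {}" using cov' K3 by blast
    have notcov: "\<And>x. x \<in> C \<Longrightarrow> \<exists>f\<in>E'. f \<inter> (C - {x}) = {}"
    proof -
      fix x assume "x \<in> C"
      then have "C - {x} \<subset> C" by blast
      then have "\<not> vertex_cover V E' (C - {x})" using mC unfolding minimal_vertex_cover_def by blast
      then show "\<exists>f\<in>E'. f \<inter> (C - {x}) = {}" using CV unfolding vertex_cover_def by blast
    qed
    have ab: "a \<notin> C \<or> b \<notin> C"
    proof (rule ccontr)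
      assume "\<not> (a \<notin> C \<or> b \<notin> C)"
      then have aC: "a \<in> C" and bC: "b \<in> C" by auto
      obtain f where f: "f \<in> E'" "f \<inter> (C - {a}) = {}" using notcov[OF aC] by blast
      have "a \<in> f" using f cov' by blast
      then have fE: "f \<in> E" using KA f by blast
      obtain x y where xy: "f = {x,y}" "x \<noteq> y" using sg[OF fE] card2E by metis
      define z where "z = (if a = x then y else x)"
      have zf: "f = {a,z}" "z \<noteq> a" using xy \<open>a \<in> f\<close> unfolding z_def by auto
      have z: "{z,a} \<in> E" "z \<notin> C"
        using zf(1) fE apply (simp add: insert_commute)
        using zf f(2) by blast
      obtain g where g: "g \<in> E'" "g \<inter> (C - {b}) = {}" using notcov[OF bC] by blast
      have "b \<in> g" using g cov' by blast
      then have gE: "g \<in> E" using KB g by blast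
      obtain x' y' where xy': "g = {x',y'}" "x' \<noteq> y'" using sg[OF gE] card2E by metis
      define z' where "z' = (if b = x' then y' else x')"
      have z'f: "g = {b,z'}" "z' \<noteq> b" using xy' \<open>b \<in> g\<close> unfolding z'_def by auto
      have z': "{z',b} \<in> E" "z' \<notin> C"
        using z'f(1) gE apply (simp add: insert_commute)
        using z'f g(2) by blast
      have "z \<noteq> z'" using K4 z z' by blast
      then have "{z,z'} \<in> E'" by (rule K2[OF _ z(1) z'(1)])
      then have "{z,z'} \<inter> C \<noteq> {}" by (rule bspec[OF cov'])
      then show False using z(2) z'(2) by simp
    qed
    show "minimal_vertex_cover V E C"
      unfolding minimal_vertex_cover_def
    proof (intro conjI allI impI)
      show "vertex_cover V E C" using CV cov by (simp add: vertex_cover_def)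
    next
      fix D assume DC: "D \<subset> C"
      show "\<not> vertex_cover V E D"
      proof
        assume vD: "vertex_cover V E D"
        then have covD: "\<forall>g\<in>E. g \<inter> D \<noteq> {}" by (simp add: vertex_cover_def)
        obtain x where x: "x \<in> C" "x \<notin> D" using DC by blast
        have DCx: "D \<subseteq> C - {x}" using DC x by blast
        obtain f where f: "f \<in> E'" "f \<inter> (C - {x}) = {}" using notcov[OF x(1)] by blast
        have fnE: "f \<notin> E"
        proof
          assume "f \<in> E"
          then have "f \<inter> D \<noteq> {}" by (rule bspec[OF covD])
          then show False using f(2) DCx by blast
        qed
        obtain u v where uv: "f = {u,v}" "u \<noteq> v" "concl4 u v a b E" using K1[OF f(1)] by blast
        have "{u,v} \<notin> E" using fnE uv(1) by simp
        then have "({u,a} \<in> E \<and> {v,b} \<in> E) \<or> ({v,a} \<in> E \<and> {u,b} \<in> E)"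
          using uv(3) unfolding concl4_def by blast
        then show False
        proof
          assume h: "{u,a} \<in> E \<and> {v,b} \<in> E"
          show False by (rule cover_aux[OF conjunct1[OF h] conjunct2[OF h] uv(1) f(2) DCx covD cov ab])
        next
          assume h: "{v,a} \<in> E \<and> {u,b} \<in> E"
          have f': "f = {v,u}" using uv(1) by (simp add: insert_commute)
          show False by (rule cover_aux[OF conjunct1[OF h] conjunct2[OF h] f' f(2) DCx covD cov ab])
        qed
      qed
    qed
  qed
  have "\<forall>C. minimal_vertex_cover V E' C \<longrightarrow> 2 * card C = card V"
    using part2 assms(2) unfolding very_well_covered_def by blast
  then have "very_well_covered V E'" unfolding very_well_covered_def using part1 by (intro conjI)
  then show ?thesis unfolding E'_def J_def .
qed

end
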